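(* Let $P$ be a simple product rule with parameters $\alpha,\beta,\gamma\in\mathbb Q$ (so $P\approx\alpha xy+\beta(x\dot y+\dot xy)+\gamma\dot x\dot y$ and $\alpha\gamma=\beta(\beta-1)$), and let $*$ be the $P$-product. Then there exists a series $\mathbb 1$ with $f*\mathbb 1=\mathbb 1*f=f$ for all series $f$ if and only if $(\beta,\gamma)\neq(0,0)$. Moreover, when $(\beta,\gamma)\neq(0,0)$ there is $\eta\in\mathbb Q$ such that the unique series $\mathbb 1$ with $\mathbb 1_\varepsilon=1$ and $\delta_a\mathbb 1=\eta\cdot\mathbb 1$ for all $a\in\Sigma$ is such a multiplicative identity.
   Context: Let $\Sigma$ be a finite alphabet, $\Sigma^*$ the set of finite words with empty word $\varepsilon$. A series is a function $f:\Sigma^*\to\mathbb Q$; write $f_w=f(w)$; series form a $\mathbb Q$-vector space under pointwise operations. For $a\in\Sigma$ the left derivative $\delta_af$ is the series $w\mapsto f(aw)$. Terms over variables $X$: generated by $u,v::=x\mid 0\mid c\cdot u\mid u+v\mid u*v$ ($c\in\mathbb Q$); $uv$ abbreviates $u*v$. A product rule is a term $P$ over $\{x,\dot x,y,\dot y\}$. The $P$-product $*$ of series and the semantics $[\![u]\!]_\varrho$ of terms under valuations $\varrho:X\to$ series are the unique pair with $(f*g)_\varepsilon=f_\varepsilon g_\varepsilon$, $\delta_a(f*g)=[\![P]\!]_{[x\mapsto f,\dot x\mapsto\delta_af,y\mapsto g,\dot y\mapsto\delta_ag]}$, and $[\![\cdot]\!]_\varrho$ interpreting variables by $\varrho$ and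 $0,c\cdot,+,*$ by the zero series, scalar multiplication, addition and $*$. $u\approx v$ means $u,v$ denote the same commutative polynomial. $P$ is simple if there are $\alpha,\beta,\gamma\in\mathbb Q$ with $\alpha\gamma=\beta(\beta-1)$ and $P\approx\alpha xy+\beta(x\dot y+\dot xy)+\gamma\dot x\dot y$. *)

theory Defs
  imports Complex_Main "HOL-Library.Poly_Mapping"
begin

type_synonym 'a series = "'a list \<Rightarrow> rat"

definition lderiv :: "'a \<Rightarrow> 'a series \<Rightarrow> 'a series" where
  "lderiv a f = (\<lambda>w. f (a # w))"

datatype 'v trm = Var 'v | Zero | Scal rat "'v trm" | Plus "'v trm" "'v trm" | Times "'v trm" "'v trm"

datatype pvar = X | Xd | Y | Yd

primrec sem :: "('a series \<Rightarrow> 'a series \<Rightarrow> 'a series) \<Rightarrow> ('v \<Rightarrow> 'a series) \<Rightarrow> 'v trm \<Rightarrow> 'a series" where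
  "sem m \<rho> (Var v) = \<rho> v"
| "sem m \<rho> Zero = (\<lambda>w. 0)"
| "sem m \<rho> (Scal c u) = (\<lambda>w. c * sem m \<rho> u w)"
| "sem m \<rho> (Plus u v) = (\<lambda>w. sem m \<rho> u w + sem m \<rho> v w)"
| "sem m \<rho> (Times u v) = m (sem m \<rho> u) (sem m \<rho> v)"

fun rule_val :: "'a series \<Rightarrow> 'a series \<Rightarrow> 'a \<Rightarrow> pvar \<Rightarrow> 'a series" where
  "rule_val f g a X = f"
| "rule_val f g a Xd = lderiv a f"
| "rule_val f g a Y = g"
| "rule_val f g a Yd = lderiv a g"

text \<open>mul is the P-product: it satisfies the defining equations (these determine it uniquely).\<close>
definition is_P_product :: "pvar trm \<Rightarrow> ('a series \<Rightarrow> 'a series \<Rightarrow> 'a series) \<Rightarrow> bool" where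
  "is_P_product P mul \<longleftrightarrow>
     (\<forall>f g. mul f g [] = f [] * g []) \<and>
     (\<forall>f g a. lderiv a (mul f g) = sem mul (rule_val f g a) P)"

primrec to_poly :: "'v trm \<Rightarrow> ('v \<Rightarrow>\<^sub>0 nat) \<Rightarrow>\<^sub>0 rat" where
  "to_poly (Var v) = Poly_Mapping.single (Poly_Mapping.single v 1) 1"
| "to_poly Zero = 0"
| "to_poly (Scal c u) = Poly_Mapping.single 0 c * to_poly u"
| "to_poly (Plus u v) = to_poly u + to_poly v"
| "to_poly (Times u v) = to_poly u * to_poly v"

definition poly_equiv :: "'v trm \<Rightarrow> 'v trm \<Rightarrow> bool" (infix "\<approx>" 50) where
  "u \<approx> v \<longleftrightarrow> to_poly u = to_poly v"

definition simple_rule :: "rat \<Rightarrow> rat \<Rightarrow> rat \<Rightarrow> pvar trm" where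
  "simple_rule \<alpha> \<beta> \<gamma> =
     Plus (Plus (Scal \<alpha> (Times (Var X) (Var Y)))
                (Scal \<beta> (Plus (Times (Var X) (Var Yd)) (Times (Var Xd) (Var Y)))))
          (Scal \<gamma> (Times (Var Xd) (Var Yd)))"

definition is_simple :: "pvar trm \<Rightarrow> bool" where
  "is_simple P \<longleftrightarrow> (\<exists>\<alpha> \<beta> \<gamma>. \<alpha> * \<gamma> = \<beta> * (\<beta> - 1) \<and> P \<approx> simple_rule \<alpha> \<beta> \<gamma>)"

end

theory Submission
  imports Defs "HOL-Library.Function_Algebras" "HOL-Library.Multiset"
begin


definition sc :: "rat \<Rightarrow> 'a series \<Rightarrow> 'a series" where "sc c f = (\<lambda>w. c * f w)"

lemma sc_0[simp]: "sc 0 f = 0" by (simp add: sc_def zero_fun_def)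
lemma sc_zero[simp]: "sc c 0 = 0" by (simp add: sc_def zero_fun_def)
lemma sc_1[simp]: "sc 1 f = f" by (simp add: sc_def)
lemma sc_addl: "sc (a+b) f = sc a f + sc b f" by (simp add: sc_def plus_fun_def algebra_simps)
lemma sc_addr: "sc a (f+g) = sc a f + sc a g" by (simp add: sc_def plus_fun_def algebra_simps)
lemma sc_sc[simp]: "sc a (sc b f) = sc (a*b) f" by (simp add: sc_def mult.assoc)
lemma sc_sum: "sc c (sum F I) = (\<Sum>i\<in>I. sc c (F i))"
proof (induct I rule: infinite_finite_induct)
  case (insert x F) thus ?case by (metis sum.insert sc_addr)
qed (metis sum.infinite sc_zero, metis sum.empty sc_zero)

fun prodl :: "('b \<Rightarrow> 'b \<Rightarrow> 'b) \<Rightarrow> 'b list \<Rightarrow> 'b" where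
  "prodl M [] = undefined"
| "prodl M [x] = x"
| "prodl M (x # y # zs) = M x (prodl M (y # zs))"

definition lst :: "('v \<Rightarrow>\<^sub>0 nat) \<Rightarrow> 'v list" where
  "lst m = (SOME xs. \<forall>v. count (mset xs) v = Poly_Mapping.lookup m v)"

lemma lst: "count (mset (lst m)) v = Poly_Mapping.lookup m v"
proof -
  obtain xs where xs: "mset xs = Abs_multiset (Poly_Mapping.lookup m)" using ex_mset by blast
  have c: "count (Abs_multiset (Poly_Mapping.lookup m)) = Poly_Mapping.lookup m"
    by (rule count_Abs_multiset) simp
  have "\<forall>v. count (mset xs) v = Poly_Mapping.lookup m v" using xs c by simp
  hence "\<forall>v. count (mset (lst m)) v = Poly_Mapping.lookup m v"
    unfolding lst_def by (rule someI)
  thus ?thesis by blast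
qed

lemma lst_add: "mset (lst (m + m')) = mset (lst m) + mset (lst m')"
  by (rule multiset_eqI) (simp add: lst lookup_add)

lemma lst_nonempty: "m \<noteq> 0 \<Longrightarrow> lst m \<noteq> []"
proof
  assume "m \<noteq> 0" "lst m = []"
  hence "Poly_Mapping.lookup m v = 0" for v using lst[of m v] by simp
  hence "m = 0" by (intro poly_mapping_eqI) simp
  thus False using \<open>m \<noteq> 0\<close> by simp
qed

lemma lst_single: "lst (Poly_Mapping.single v (1::nat)) = [v]"
proof -
  have "mset (lst (Poly_Mapping.single v (1::nat))) = {#v#}"
    by (rule multiset_eqI) (simp add: lst lookup_single when_def)
  thus ?thesis by simp
qed

locale calg =
  fixes M :: "'a series \<Rightarrow> 'a series \<Rightarrow> 'a series"
  assumes comm: "M f g = M g f"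
    and assoc: "M (M f g) h = M f (M g h)"
    and addL: "M (f + g) h = M f h + M g h"
    and scL: "M (sc c f) g = sc c (M f g)"
begin

lemma addR: "M h (f + g) = M h f + M h g" using addL comm by metis
lemma scR: "M g (sc c f) = sc c (M g f)" using scL comm by metis
lemma zeroL[simp]: "M 0 g = 0" using scL[of 0 0 g] by simp
lemma zeroR[simp]: "M g 0 = 0" using comm zeroL by metis
lemma sumL: "M (sum F I) g = (\<Sum>i\<in>I. M (F i) g)"
proof (induct I rule: infinite_finite_induct)
  case (insert x F) thus ?case by (metis sum.insert addL)
qed (metis sum.infinite zeroL, metis sum.empty zeroL)
lemma sumR: "M g (sum F I) = (\<Sum>i\<in>I. M g (F i))"
proof (induct I rule: infinite_finite_induct)
  case (insert x F) thus ?case by (metis sum.insert addR)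
qed (metis sum.infinite zeroR, metis sum.empty zeroR)

lemma prodl_cons: "xs \<noteq> [] \<Longrightarrow> prodl M (x # xs) = M x (prodl M xs)"
  by (cases xs) auto

lemma prodl_append: "xs \<noteq> [] \<Longrightarrow> ys \<noteq> [] \<Longrightarrow> prodl M (xs @ ys) = M (prodl M xs) (prodl M ys)"
proof (induct xs)
  case Nil thus ?case by simp
next
  case (Cons x xs)
  show ?case
  proof (cases "xs = []")
    case True thus ?thesis using Cons by (simp add: prodl_cons)
  next
    case False thus ?thesis using Cons by (simp add: prodl_cons assoc)
  qed
qed

lemma prodl_perm: "mset xs = mset ys \<Longrightarrow> prodl M xs = prodl M ys"
proof (induct xs arbitrary: ys)
  case Nil thus ?case by simp
next
  case (Cons x xs)
  hence "x \<in> set ys" by (metis list.set_intros(1) set_mset_mset)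
  then obtain ys1 ys2 where ys: "ys = ys1 @ x # ys2" by (meson split_list)
  have ms: "mset xs = mset (ys1 @ ys2)" using Cons.prems ys by simp
  show ?case
  proof (cases "xs = []")
    case True
    hence "ys1 = [] \<and> ys2 = []" using ms by simp
    thus ?thesis using ys True by simp
  next
    case False
    hence ne: "ys1 @ ys2 \<noteq> []" using ms by auto
    have L: "prodl M (x # xs) = M x (prodl M (ys1 @ ys2))"
      using Cons.hyps[OF ms] False by (simp add: prodl_cons)
    have "prodl M (ys1 @ x # ys2) = M x (prodl M (ys1 @ ys2))"
    proof (cases "ys1 = []")
      case True thus ?thesis using ne by (simp add: prodl_cons)
    next
      case f1: False
      show ?thesis
      proof (cases "ys2 = []")
        case True thus ?thesis using f1 prodl_append[of ys1 "[x]"] comm by simp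
      next
        case False
        have "prodl M (ys1 @ x # ys2) = M (prodl M ys1) (M x (prodl M ys2))"
          using f1 False prodl_append[of ys1 "x # ys2"] by (simp add: prodl_cons)
        also have "\<dots> = M x (M (prodl M ys1) (prodl M ys2))"
          by (metis assoc comm)
        finally show ?thesis using f1 False prodl_append by simp
      qed
    qed
    thus ?thesis using L ys by simp
  qed
qed

definition mon :: "('v \<Rightarrow> 'a series) \<Rightarrow> ('v \<Rightarrow>\<^sub>0 nat) \<Rightarrow> 'a series" where
  "mon \<rho> m = prodl M (map \<rho> (lst m))"

lemma mon_add: "m \<noteq> 0 \<Longrightarrow> m' \<noteq> 0 \<Longrightarrow> mon \<rho> (m + m') = M (mon \<rho> m) (mon \<rho> m')"
proof -
  assume a: "m \<noteq> 0" "m' \<noteq> 0"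
  have "mon \<rho> (m + m') = prodl M (map \<rho> (lst m @ lst m'))"
    unfolding mon_def by (rule prodl_perm) (simp add: lst_add)
  also have "\<dots> = M (mon \<rho> m) (mon \<rho> m')"
    unfolding mon_def map_append
    using prodl_append[of "map \<rho> (lst m)" "map \<rho> (lst m')"] lst_nonempty[OF a(1)] lst_nonempty[OF a(2)] by simp
  finally show ?thesis .
qed

definition Phi :: "('v \<Rightarrow> 'a series) \<Rightarrow> (('v \<Rightarrow>\<^sub>0 nat) \<Rightarrow>\<^sub>0 rat) \<Rightarrow> 'a series" where
  "Phi \<rho> p = (\<Sum>m\<in>Poly_Mapping.keys p. sc (Poly_Mapping.lookup p m) (mon \<rho> m))"

lemma Phi_super: "finite K \<Longrightarrow> Poly_Mapping.keys p \<subseteq> K \<Longrightarrow>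
   Phi \<rho> p = (\<Sum>m\<in>K. sc (Poly_Mapping.lookup p m) (mon \<rho> m))"
  unfolding Phi_def
  by (rule sum.mono_neutral_left) (auto simp: in_keys_iff)

lemma Phi_add: "Phi \<rho> (p + q) = Phi \<rho> p + Phi \<rho> q"
proof -
  let ?K = "Poly_Mapping.keys p \<union> Poly_Mapping.keys q"
  have "Phi \<rho> (p + q) = (\<Sum>m\<in>?K. sc (Poly_Mapping.lookup (p+q) m) (mon \<rho> m))"
    by (rule Phi_super) (auto simp: keys_add)
  also have "\<dots> = (\<Sum>m\<in>?K. sc (Poly_Mapping.lookup p m) (mon \<rho> m)) + (\<Sum>m\<in>?K. sc (Poly_Mapping.lookup q m) (mon \<rho> m))"
    by (simp add: lookup_add sc_addl sum.distrib)
  also have "\<dots> = Phi \<rho> p + Phi \<rho> q"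
    by (subst (1 2) Phi_super[of ?K]) auto
  finally show ?thesis .
qed

lemma Phi_zero[simp]: "Phi \<rho> 0 = 0" by (simp add: Phi_def)

lemma Phi_sum: "Phi \<rho> (sum p I) = (\<Sum>i\<in>I. Phi \<rho> (p i))"
  by (induct I rule: infinite_finite_induct) (auto simp: Phi_add)

lemma Phi_single: "Phi \<rho> (Poly_Mapping.single m a) = sc a (mon \<rho> m)"
  by (simp add: Phi_def)

lemma pm_expand: "p = (\<Sum>m\<in>Poly_Mapping.keys p. Poly_Mapping.single m (Poly_Mapping.lookup p m))"
proof (rule poly_mapping_eqI)
  fix k
  show "Poly_Mapping.lookup p k = Poly_Mapping.lookup (\<Sum>m\<in>Poly_Mapping.keys p. Poly_Mapping.single m (Poly_Mapping.lookup p m)) k"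
    by (simp add: lookup_sum lookup_single when_def in_keys_iff)
qed

lemma lookup_scal: "Poly_Mapping.lookup (Poly_Mapping.single 0 c * p) k = c * Poly_Mapping.lookup p k"
proof -
  have "Poly_Mapping.single 0 c * p = Poly_Mapping.map ((*) c) p" by (simp add: mult_map_scale_conv_mult)
  thus ?thesis by (simp add: Poly_Mapping.map.rep_eq when_def)
qed

lemma Phi_scal: "Phi \<rho> (Poly_Mapping.single 0 c * p) = sc c (Phi \<rho> p)"
proof -
  have "Poly_Mapping.keys (Poly_Mapping.single 0 c * p) \<subseteq> Poly_Mapping.keys p"
    by (auto simp: in_keys_iff lookup_scal)
  hence "Phi \<rho> (Poly_Mapping.single 0 c * p) = (\<Sum>m\<in>Poly_Mapping.keys p. sc (c * Poly_Mapping.lookup p m) (mon \<rho> m))"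
    by (subst Phi_super[of "Poly_Mapping.keys p"]) (auto simp: lookup_scal)
  thus ?thesis by (simp add: Phi_def sc_sum)
qed

lemma pm_add_0: "(m::'v \<Rightarrow>\<^sub>0 nat) + m' = 0 \<Longrightarrow> m = 0"
proof (rule poly_mapping_eqI)
  fix k assume "m + m' = 0"
  hence "Poly_Mapping.lookup (m + m') k = 0" by simp
  thus "Poly_Mapping.lookup m k = Poly_Mapping.lookup 0 k" by (simp add: lookup_add)
qed

lemma Phi_times:
  assumes p0: "Poly_Mapping.lookup p 0 = 0" and q0: "Poly_Mapping.lookup q 0 = 0"
  shows "Phi \<rho> (p * q) = M (Phi \<rho> p) (Phi \<rho> q)"
    and "Poly_Mapping.lookup (p * q) (0::'v \<Rightarrow>\<^sub>0 nat) = 0"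
proof -
  let ?Kp = "Poly_Mapping.keys p" and ?Kq = "Poly_Mapping.keys q"
  let ?lp = "Poly_Mapping.lookup p" and ?lq = "Poly_Mapping.lookup q"
  have pq: "p * q = (\<Sum>m\<in>?Kp. \<Sum>m'\<in>?Kq. Poly_Mapping.single (m + m') (?lp m * ?lq m'))"
  proof -
    have "p * q = (\<Sum>m\<in>?Kp. Poly_Mapping.single m (?lp m)) * (\<Sum>m'\<in>?Kq. Poly_Mapping.single m' (?lq m'))"
      by (rule arg_cong2[where f="(*)"]) (rule pm_expand)+
    thus ?thesis by (simp only: sum_product mult_single)
  qed
  have nz: "m \<in> ?Kp \<Longrightarrow> m \<noteq> 0" "m' \<in> ?Kq \<Longrightarrow> m' \<noteq> 0" for m m'
    using p0 q0 by (auto simp: in_keys_iff)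
  have "Phi \<rho> (p * q) = (\<Sum>m\<in>?Kp. \<Sum>m'\<in>?Kq. sc (?lp m * ?lq m') (mon \<rho> (m + m')))"
    by (simp add: pq Phi_sum Phi_single)
  also have "\<dots> = (\<Sum>m\<in>?Kp. \<Sum>m'\<in>?Kq. sc (?lp m * ?lq m') (M (mon \<rho> m) (mon \<rho> m')))"
    using nz by (intro sum.cong refl) (simp add: mon_add)
  also have "\<dots> = M (Phi \<rho> p) (Phi \<rho> q)"
    unfolding Phi_def sumL by (simp add: sumR scL scR sc_sum mult.commute)
  finally show "Phi \<rho> (p * q) = M (Phi \<rho> p) (Phi \<rho> q)" .
  have "Poly_Mapping.lookup (p * q) 0 = (\<Sum>m\<in>?Kp. \<Sum>m'\<in>?Kq. (?lp m * ?lq m' when m + m' = 0))"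
    by (simp add: pq lookup_sum lookup_single)
  also have "\<dots> = 0"
    using nz pm_add_0 by (intro sum.neutral ballI) (auto simp: when_def)
  finally show "Poly_Mapping.lookup (p * q) (0::'v \<Rightarrow>\<^sub>0 nat) = 0" .
qed

lemma sem_Phi: "Poly_Mapping.lookup (to_poly t) 0 = 0 \<and> sem M \<rho> t = Phi \<rho> (to_poly t)"
proof (induct t)
  case (Var v)
  have n: "Poly_Mapping.single v (1::nat) \<noteq> 0" by (metis lookup_single_eq lookup_zero one_neq_zero)
  show ?case
    by (simp only: to_poly.simps sem.simps Phi_single mon_def lst_single
      lookup_single_not_eq[OF n] list.map prodl.simps sc_1 simp_thms)
next
  case Zero show ?case by (simp add: zero_fun_def)
next
  case (Scal c u) thus ?case by (simp add: lookup_scal Phi_scal sc_def)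
next
  case (Plus u v) thus ?case by (simp add: lookup_add Phi_add plus_fun_def)
next
  case (Times u v)
  then have a: "Poly_Mapping.lookup (to_poly u) 0 = 0" "Poly_Mapping.lookup (to_poly v) 0 = 0"
    and b: "sem M \<rho> u = Phi \<rho> (to_poly u)" "sem M \<rho> v = Phi \<rho> (to_poly v)" by auto
  show ?case using Phi_times[OF a] b by simp
qed

lemma sem_equiv: "u \<approx> v \<Longrightarrow> sem M \<rho> u = sem M \<rho> v"
  using sem_Phi[of u \<rho>] sem_Phi[of v \<rho>] by (simp add: poly_equiv_def)

end


context calg begin
lemma left_comm: "M f (M g h) = M g (M f h)" by (metis assoc comm)

lemma assoc_id:
  assumes h: "\<alpha> * \<gamma> = \<beta> * (\<beta> - 1)"
  shows "sc \<alpha> (M (M f g) h) + sc \<beta> (M (M f g) h' + M (sc \<alpha> (M f g) + sc \<beta> (M f g' + M f' g) + sc \<gamma> (M f' g')) h)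
           + sc \<gamma> (M (sc \<alpha> (M f g) + sc \<beta> (M f g' + M f' g) + sc \<gamma> (M f' g')) h')
       = sc \<alpha> (M f (M g h)) + sc \<beta> (M f (sc \<alpha> (M g h) + sc \<beta> (M g h' + M g' h) + sc \<gamma> (M g' h')) + M f' (M g h))
           + sc \<gamma> (M f' (sc \<alpha> (M g h) + sc \<beta> (M g h' + M g' h) + sc \<gamma> (M g' h')))"
proof -
  have e: "\<alpha> * (\<gamma> * x) = \<beta> * (\<beta> * x) - \<beta> * x" for x :: rat
    using h by (metis mult.assoc right_diff_distrib mult_1 left_diff_distrib)
  show ?thesis
    apply (simp only: addL addR scL scR assoc)
    apply (rule ext)
    apply (simp add: sc_def algebra_simps e)
    done
qed
end



definition eqn :: "nat \<Rightarrow> 'a series \<Rightarrow> 'a series \<Rightarrow> bool" where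
  "eqn n F G \<longleftrightarrow> (\<forall>w. length w \<le> n \<longrightarrow> F w = G w)"

definition trunc :: "nat \<Rightarrow> 'a series \<Rightarrow> 'a series" where
  "trunc n f = (\<lambda>w. if length w \<le> n then f w else 0)"

lemma eqn_refl[simp]: "eqn n F F" by (simp add: eqn_def)
lemma eqn_sym: "eqn n F G \<Longrightarrow> eqn n G F" by (simp add: eqn_def)
lemma eqn_trans[trans]: "eqn n F G \<Longrightarrow> eqn n G H \<Longrightarrow> eqn n F H" by (simp add: eqn_def)
lemma eqn_mono: "eqn n F G \<Longrightarrow> m \<le> n \<Longrightarrow> eqn m F G" by (simp add: eqn_def)
lemma eqn_trunc: "eqn n (trunc n f) f" by (simp add: eqn_def trunc_def)
lemma trunc_eq: "eqn n f g \<Longrightarrow> trunc n f = trunc n g" by (auto simp: eqn_def trunc_def)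
lemma eqn_0: "eqn 0 F G \<longleftrightarrow> F [] = G []" by (simp add: eqn_def)
lemma eqn_Suc: "eqn (Suc n) F G \<longleftrightarrow> F [] = G [] \<and> (\<forall>a. eqn n (lderiv a F) (lderiv a G))"
proof
  assume h: "eqn (Suc n) F G"
  have 1: "F [] = G []" using spec[OF h[unfolded eqn_def], of "[]"] by simp
  have 2: "eqn n (lderiv a F) (lderiv a G)" for a
    unfolding eqn_def lderiv_def
  proof (intro allI impI)
    fix w :: "'a list" assume "length w \<le> n"
    thus "F (a # w) = G (a # w)" using spec[OF h[unfolded eqn_def], of "a # w"] by simp
  qed
  show "F [] = G [] \<and> (\<forall>a. eqn n (lderiv a F) (lderiv a G))" using 1 2 by blast
next
  assume h: "F [] = G [] \<and> (\<forall>a. eqn n (lderiv a F) (lderiv a G))"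
  show "eqn (Suc n) F G" unfolding eqn_def
  proof (intro allI impI)
    fix w :: "'a list" assume l: "length w \<le> Suc n"
    show "F w = G w"
    proof (cases w)
      case Nil thus ?thesis using h by simp
    next
      case (Cons a u)
      hence "length u \<le> n" using l by simp
      hence "lderiv a F u = lderiv a G u" using h by (simp add: eqn_def)
      thus ?thesis using Cons by (simp add: lderiv_def)
    qed
  qed
qed
lemma eqn_D: "eqn n F G \<Longrightarrow> length w \<le> n \<Longrightarrow> F w = G w" by (simp add: eqn_def)
lemma eqn_deriv: "eqn (Suc n) F G \<Longrightarrow> eqn n (lderiv a F) (lderiv a G)" by (simp add: eqn_Suc)
lemma eqn_Suc_mono: "eqn (Suc n) F G \<Longrightarrow> eqn n F G" by (erule eqn_mono) simp

lemma lderiv_add: "lderiv a (f + g) = lderiv a f + lderiv a g" by (simp add: lderiv_def plus_fun_def)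
lemma lderiv_sc: "lderiv a (sc c f) = sc c (lderiv a f)" by (simp add: lderiv_def sc_def)

definition SexpM :: "rat \<Rightarrow> rat \<Rightarrow> rat \<Rightarrow> ('a series \<Rightarrow> 'a series \<Rightarrow> 'a series) \<Rightarrow> 'a series \<Rightarrow> 'a series \<Rightarrow> 'a \<Rightarrow> 'a series" where
  "SexpM \<alpha> \<beta> \<gamma> M f g a = sc \<alpha> (M f g) + sc \<beta> (M f (lderiv a g) + M (lderiv a f) g) + sc \<gamma> (M (lderiv a f) (lderiv a g))"

lemma SexpM_apply: "SexpM \<alpha> \<beta> \<gamma> M f g a w = \<alpha> * M f g w + \<beta> * (M f (lderiv a g) w + M (lderiv a f) g w) + \<gamma> * M (lderiv a f) (lderiv a g) w"
  by (simp add: SexpM_def sc_def)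

lemma sem_simple: "sem M (rule_val f g a) (simple_rule \<alpha> \<beta> \<gamma>) = SexpM \<alpha> \<beta> \<gamma> M f g a"
  by (rule ext) (simp add: simple_rule_def SexpM_apply)

lemma eqn_SexpM:
  assumes "eqn n (M f g) (M' f' g')" "eqn n (M f (lderiv a g)) (M' f' (lderiv a g'))"
    "eqn n (M (lderiv a f) g) (M' (lderiv a f') g')" "eqn n (M (lderiv a f) (lderiv a g)) (M' (lderiv a f') (lderiv a g'))"
  shows "eqn n (SexpM \<alpha> \<beta> \<gamma> M f g a) (SexpM \<alpha> \<beta> \<gamma> M' f' g' a)"
  using assms by (simp add: eqn_def SexpM_apply)

locale pp =
  fixes P :: "pvar trm" and \<alpha> \<beta> \<gamma> :: rat and mul :: "'a series \<Rightarrow> 'a series \<Rightarrow> 'a series"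
  assumes simple1: "\<alpha> * \<gamma> = \<beta> * (\<beta> - 1)" and simple2: "P \<approx> simple_rule \<alpha> \<beta> \<gamma>"
    and prod: "is_P_product P mul"
begin

lemma mul_nil: "mul f g [] = f [] * g []" using prod by (simp add: is_P_product_def)
lemma lderiv_mul: "lderiv a (mul f g) = sem mul (rule_val f g a) P" using prod by (simp add: is_P_product_def)

definition mn :: "nat \<Rightarrow> 'a series \<Rightarrow> 'a series \<Rightarrow> 'a series" where
  "mn n f g = trunc n (mul f g)"

definition Loc where "Loc n \<longleftrightarrow> (\<forall>f g f' g'. eqn n f f' \<longrightarrow> eqn n g g' \<longrightarrow> eqn n (mul f g) (mul f' g'))"
definition Lvl where "Lvl n \<longleftrightarrow> Loc n \<and> (\<forall>f g. eqn n (mul f g) (mul g f))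
   \<and> (\<forall>f g h. eqn n (mul (mul f g) h) (mul f (mul g h)))
   \<and> (\<forall>f g h. eqn n (mul (f + g) h) (mul f h + mul g h))
   \<and> (\<forall>c f g. eqn n (mul (sc c f) g) (sc c (mul f g)))"

lemma LocD: "Loc n \<Longrightarrow> eqn n f f' \<Longrightarrow> eqn n g g' \<Longrightarrow> eqn n (mul f g) (mul f' g')"
  by (simp add: Loc_def)

lemma calg_mn: assumes "Lvl n" shows "calg (mn n)"
proof -
  have L: "Loc n" and C: "\<And>f g. eqn n (mul f g) (mul g f)"
    and A: "\<And>f g h. eqn n (mul (mul f g) h) (mul f (mul g h))"
    and Ad: "\<And>f g h. eqn n (mul (f + g) h) (mul f h + mul g h)"
    and S: "\<And>c f g. eqn n (mul (sc c f) g) (sc c (mul f g))" using assms by (auto simp: Lvl_def)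
  show ?thesis
  proof
    fix f g h :: "'a series" and c
    show "mn n f g = mn n g f" unfolding mn_def by (rule trunc_eq) (rule C)
    have "eqn n (mul (trunc n (mul f g)) h) (mul f (trunc n (mul g h)))"
    proof -
      have "eqn n (mul (trunc n (mul f g)) h) (mul (mul f g) h)" by (rule LocD[OF L eqn_trunc eqn_refl])
      also have "eqn n \<dots> (mul f (mul g h))" by (rule A)
      also have "eqn n \<dots> (mul f (trunc n (mul g h)))" by (rule LocD[OF L eqn_refl eqn_sym[OF eqn_trunc]])
      finally show ?thesis .
    qed
    thus "mn n (mn n f g) h = mn n f (mn n g h)" unfolding mn_def by (rule trunc_eq)
    have "trunc n (mul (f + g) h) = trunc n (mul f h + mul g h)" by (rule trunc_eq) (rule Ad)
    thus "mn n (f + g) h = mn n f h + mn n g h" unfolding mn_def by (simp add: trunc_def fun_eq_iff)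
    have "trunc n (mul (sc c f) g) = trunc n (sc c (mul f g))" by (rule trunc_eq) (rule S)
    thus "mn n (sc c f) g = sc c (mn n f g)" unfolding mn_def by (simp add: trunc_def fun_eq_iff sc_def)
  qed
qed

lemma sem_tr: assumes "Loc n" shows "eqn n (sem mul \<rho> t) (sem (mn n) \<rho> t)"
proof (induct t)
  case (Times u v)
  have "eqn n (mul (sem mul \<rho> u) (sem mul \<rho> v)) (mul (sem (mn n) \<rho> u) (sem (mn n) \<rho> v))"
    by (rule LocD[OF assms Times])
  also have "eqn n \<dots> (mn n (sem (mn n) \<rho> u) (sem (mn n) \<rho> v))"
    unfolding mn_def by (rule eqn_sym[OF eqn_trunc])
  finally show ?case by simp
qed (auto simp: eqn_def)

lemma D: assumes "Lvl n" shows "eqn n (lderiv a (mul f g)) (SexpM \<alpha> \<beta> \<gamma> mul f g a)"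
proof -
  have L: "Loc n" using assms by (simp add: Lvl_def)
  interpret calg "mn n" by (rule calg_mn[OF assms])
  have "eqn n (lderiv a (mul f g)) (sem (mn n) (rule_val f g a) P)"
    unfolding lderiv_mul by (rule sem_tr[OF L])
  also have "sem (mn n) (rule_val f g a) P = sem (mn n) (rule_val f g a) (simple_rule \<alpha> \<beta> \<gamma>)"
    by (rule sem_equiv[OF simple2])
  also have "eqn n \<dots> (sem mul (rule_val f g a) (simple_rule \<alpha> \<beta> \<gamma>))"
    by (rule eqn_sym[OF sem_tr[OF L]])
  finally show ?thesis by (simp add: sem_simple)
qed

end


lemma eqn_add: "eqn n A A' \<Longrightarrow> eqn n B B' \<Longrightarrow> eqn n (A + B) (A' + B')" by (simp add: eqn_def)
lemma eqn_sc: "eqn n A A' \<Longrightarrow> eqn n (sc c A) (sc c A')" by (simp add: eqn_def sc_def)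

lemma lderiv_sc': "lderiv a (\<lambda>w. c * f w) = (\<lambda>w. c * lderiv a f w)" by (simp add: lderiv_def)

context pp begin

lemma Lvl_0: "Lvl 0"
  unfolding Lvl_def Loc_def eqn_0 by (simp add: mul_nil algebra_simps sc_def)

lemma Lvl_Suc: assumes H: "Lvl n" shows "Lvl (Suc n)"
proof -
  have L: "Loc n" and C: "\<And>f g. eqn n (mul f g) (mul g f)"
    and A: "\<And>f g h. eqn n (mul (mul f g) h) (mul f (mul g h))"
    and Ad: "\<And>f g h. eqn n (mul (f + g) h) (mul f h + mul g h)"
    and S: "\<And>c f g. eqn n (mul (sc c f) g) (sc c (mul f g))" using H by (auto simp: Lvl_def)
  interpret calg "mn n" by (rule calg_mn[OF H])
  have Dn: "\<And>a f g. eqn n (lderiv a (mul f g)) (SexpM \<alpha> \<beta> \<gamma> mul f g a)" by (rule D[OF H])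
  have L1: "Loc (Suc n)" unfolding Loc_def
  proof (intro allI impI)
    fix f g f' g' :: "'a series" assume e1: "eqn (Suc n) f f'" and e2: "eqn (Suc n) g g'"
    show "eqn (Suc n) (mul f g) (mul f' g')" unfolding eqn_Suc
    proof (intro conjI allI)
      show "mul f g [] = mul f' g' []" using e1 e2 by (simp add: mul_nil eqn_Suc)
      fix a
      note f0 = eqn_Suc_mono[OF e1] and f1 = eqn_deriv[OF e1, of a]
        and g0 = eqn_Suc_mono[OF e2] and g1 = eqn_deriv[OF e2, of a]
      have "eqn n (lderiv a (mul f g)) (SexpM \<alpha> \<beta> \<gamma> mul f g a)" by (rule Dn)
      also have "eqn n \<dots> (SexpM \<alpha> \<beta> \<gamma> mul f' g' a)"
        by (rule eqn_SexpM; rule LocD[OF L]; fact)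
      also have "eqn n \<dots> (lderiv a (mul f' g'))" by (rule eqn_sym[OF Dn])
      finally show "eqn n (lderiv a (mul f g)) (lderiv a (mul f' g'))" .
    qed
  qed
  have C1: "eqn (Suc n) (mul f g) (mul g f)" for f g
    unfolding eqn_Suc
  proof (intro conjI allI)
    show "mul f g [] = mul g f []" by (simp add: mul_nil)
    fix a
    have "eqn n (SexpM \<alpha> \<beta> \<gamma> mul f g a) (SexpM \<alpha> \<beta> \<gamma> mul g f a)"
      using eqn_D[OF C[of f g]] eqn_D[OF C[of f "lderiv a g"]] eqn_D[OF C[of "lderiv a f" g]]
        eqn_D[OF C[of "lderiv a f" "lderiv a g"]]
      by (auto simp: eqn_def SexpM_apply algebra_simps)
    thus "eqn n (lderiv a (mul f g)) (lderiv a (mul g f))"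
      by (meson Dn eqn_sym eqn_trans)
  qed
  have Ad1: "eqn (Suc n) (mul (f + g) h) (mul f h + mul g h)" for f g h
    unfolding eqn_Suc
  proof (intro conjI allI)
    show "mul (f + g) h [] = (mul f h + mul g h) []" by (simp add: mul_nil algebra_simps)
    fix a
    have "eqn n (SexpM \<alpha> \<beta> \<gamma> mul (f + g) h a) (SexpM \<alpha> \<beta> \<gamma> mul f h a + SexpM \<alpha> \<beta> \<gamma> mul g h a)"
      using eqn_D[OF Ad[of f g h]] eqn_D[OF Ad[of f g "lderiv a h"]] eqn_D[OF Ad[of "lderiv a f" "lderiv a g" h]]
        eqn_D[OF Ad[of "lderiv a f" "lderiv a g" "lderiv a h"]]
      by (auto simp: eqn_def SexpM_apply algebra_simps lderiv_add)
    hence "eqn n (lderiv a (mul (f + g) h)) (lderiv a (mul f h) + lderiv a (mul g h))"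
      by (meson Dn eqn_sym eqn_trans eqn_add)
    thus "eqn n (lderiv a (mul (f + g) h)) (lderiv a (mul f h + mul g h))" by (simp add: lderiv_add)
  qed
  have S1: "eqn (Suc n) (mul (sc c f) g) (sc c (mul f g))" for c f g
    unfolding eqn_Suc
  proof (intro conjI allI)
    show "mul (sc c f) g [] = sc c (mul f g) []" by (simp add: mul_nil sc_def)
    fix a
    have "eqn n (SexpM \<alpha> \<beta> \<gamma> mul (sc c f) g a) (sc c (SexpM \<alpha> \<beta> \<gamma> mul f g a))"
      using eqn_D[OF S[of c f g]] eqn_D[OF S[of c f "lderiv a g"]] eqn_D[OF S[of c "lderiv a f" g]]
        eqn_D[OF S[of c "lderiv a f" "lderiv a g"]]
      by (auto simp: eqn_def SexpM_apply algebra_simps lderiv_sc' sc_def)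
    hence "eqn n (lderiv a (mul (sc c f) g)) (sc c (lderiv a (mul f g)))"
      by (meson Dn eqn_sym eqn_trans eqn_sc)
    thus "eqn n (lderiv a (mul (sc c f) g)) (lderiv a (sc c (mul f g)))" by (simp add: lderiv_sc)
  qed
  have m1: "eqn n (mul X Y) (mn n X Y)" for X Y unfolding mn_def by (rule eqn_sym[OF eqn_trunc])
  have mcong: "eqn n X X' \<Longrightarrow> eqn n Y Y' \<Longrightarrow> mn n X Y = mn n X' Y'" for X X' Y Y'
    unfolding mn_def by (rule trunc_eq) (rule LocD[OF L])
  have SM: "eqn n (SexpM \<alpha> \<beta> \<gamma> mul X Y a) (SexpM \<alpha> \<beta> \<gamma> (mn n) X Y a)" for X Y a
    by (rule eqn_SexpM; rule m1)
  have DM: "eqn n (lderiv a (mul X Y)) (SexpM \<alpha> \<beta> \<gamma> (mn n) X Y a)" for X Y a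
    using Dn SM eqn_trans by blast
  have A1: "eqn (Suc n) (mul (mul f g) h) (mul f (mul g h))" for f g h
    unfolding eqn_Suc
  proof (intro conjI allI)
    show "mul (mul f g) h [] = mul f (mul g h) []" by (simp add: mul_nil mult.assoc)
    fix a
    have e1: "mn n (mul f g) Z = mn n (mn n f g) Z" for Z by (rule mcong[OF m1 eqn_refl])
    have e2: "mn n (lderiv a (mul f g)) Z = mn n (SexpM \<alpha> \<beta> \<gamma> (mn n) f g a) Z" for Z by (rule mcong[OF DM eqn_refl])
    have e3: "mn n Z (mul g h) = mn n Z (mn n g h)" for Z by (rule mcong[OF eqn_refl m1])
    have e4: "mn n Z (lderiv a (mul g h)) = mn n Z (SexpM \<alpha> \<beta> \<gamma> (mn n) g h a)" for Z by (rule mcong[OF eqn_refl DM])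
    have "SexpM \<alpha> \<beta> \<gamma> (mn n) (mul f g) h a = SexpM \<alpha> \<beta> \<gamma> (mn n) f (mul g h) a"
      unfolding SexpM_def e1 e2 e3 e4 unfolding SexpM_def by (rule assoc_id[OF simple1])
    thus "eqn n (lderiv a (mul (mul f g) h)) (lderiv a (mul f (mul g h)))"
      using DM[of a "mul f g" h] DM[of a f "mul g h"] by (metis eqn_sym eqn_trans)
  qed
  show ?thesis unfolding Lvl_def using L1 C1 A1 Ad1 S1 by blast
qed

lemma Lvl_all: "Lvl n" by (induct n) (auto intro: Lvl_0 Lvl_Suc)

lemma comm_g: "mul f g = mul g f"
proof
  fix w :: "'a list"
  have "eqn (length w) (mul f g) (mul g f)" using Lvl_all by (simp add: Lvl_def)
  thus "mul f g w = mul g f w" by (simp add: eqn_def)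
qed

lemma unit:
  assumes bg: "(\<beta>, \<gamma>) \<noteq> (0, 0)"
    and o1: "one [] = 1" and o2: "\<forall>a. lderiv a one = (\<lambda>w. (if \<gamma> = 0 then - \<alpha> else (1 - \<beta>) / \<gamma>) * one w)"
  shows "mul f one = f \<and> mul one f = f"
proof -
  define \<eta> where "\<eta> = (if \<gamma> = 0 then - \<alpha> else (1 - \<beta>) / \<gamma>)"
  have c1: "\<alpha> + \<beta> * \<eta> = 0" and c2: "\<beta> + \<gamma> * \<eta> = 1"
  proof -
    have "(\<alpha> + \<beta> * \<eta> = 0) \<and> (\<beta> + \<gamma> * \<eta> = 1)"
    proof (cases "\<gamma> = 0")
      case True
      hence "\<beta> \<noteq> 0" using bg by auto
      moreover have "\<beta> * (\<beta> - 1) = 0" using simple1 True by simp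
      ultimately have "\<beta> = 1" by simp
      thus ?thesis using True by (simp add: \<eta>_def)
    next
      case False
      have "\<alpha> * \<gamma> + \<beta> * (1 - \<beta>) = 0" using simple1 by (simp add: algebra_simps)
      hence "(\<alpha> * \<gamma> + \<beta> * (1 - \<beta>)) / \<gamma> = 0" by simp
      hence "\<alpha> + \<beta> * ((1 - \<beta>) / \<gamma>) = 0" using False by (simp add: field_simps)
      thus ?thesis using False by (simp add: \<eta>_def)
    qed
    thus "\<alpha> + \<beta> * \<eta> = 0" "\<beta> + \<gamma> * \<eta> = 1" by auto
  qed
  have od: "lderiv a one = sc \<eta> one" for a using o2 by (simp add: \<eta>_def sc_def)
  have key: "eqn n (mul f one) f" for n f
  proof (induct n arbitrary: f)
    case 0 show ?case by (simp add: eqn_0 mul_nil o1)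
  next
    case (Suc n)
    have H: "Lvl n" by (rule Lvl_all)
    have S: "eqn n (mul (sc c g) h) (sc c (mul g h))" for c g h using H by (simp add: Lvl_def)
    have sr: "mul g (sc c h) = sc c (mul g h)" for c g h
    proof -
      have e: "eqn (length w) (mul (sc c h) g) (sc c (mul h g))" for w using Lvl_all by (simp add: Lvl_def)
      have "mul (sc c h) g w = sc c (mul h g) w" for w using eqn_D[OF e[of w]] by simp
      hence "mul (sc c h) g = sc c (mul h g)" by (rule ext)
      thus ?thesis by (simp add: comm_g)
    qed
    show ?case unfolding eqn_Suc
    proof (intro conjI allI)
      show "mul f one [] = f []" by (simp add: mul_nil o1)
      fix a
      have "eqn n (SexpM \<alpha> \<beta> \<gamma> mul f one a) (lderiv a f)" unfolding eqn_def
      proof (intro allI impI)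
        fix w :: "'a list" assume lw: "length w \<le> n"
        have 1: "mul f one w = f w" by (rule eqn_D[OF Suc[of f] lw])
        have 2: "mul (lderiv a f) one w = lderiv a f w" by (rule eqn_D[OF Suc[of "lderiv a f"] lw])
        have "SexpM \<alpha> \<beta> \<gamma> mul f one a w = \<alpha> * mul f one w + \<beta> * (\<eta> * mul f one w + mul (lderiv a f) one w) + \<gamma> * (\<eta> * mul (lderiv a f) one w)"
          unfolding SexpM_apply od sr by (simp only: sc_def)
        also have "\<dots> = (\<alpha> + \<beta> * \<eta>) * f w + (\<beta> + \<gamma> * \<eta>) * lderiv a f w"
          unfolding 1 2 by (simp add: algebra_simps)
        also have "\<dots> = lderiv a f w" using c1 c2 by simp
        finally show "SexpM \<alpha> \<beta> \<gamma> mul f one a w = lderiv a f w" .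
      qed
      thus "eqn n (lderiv a (mul f one)) (lderiv a f)" using D[OF H] eqn_trans by blast
    qed
  qed
  have "mul f one = f"
  proof
    fix w :: "'a list" show "mul f one w = f w" using key[of "length w" f] by (simp add: eqn_def)
  qed
  thus ?thesis by (simp add: comm_g)
qed

lemma no_unit:
  assumes bg: "\<beta> = 0" "\<gamma> = 0" shows "\<not> (\<forall>f. mul f one = f \<and> mul one f = f)"
proof
  assume u: "\<forall>f. mul f one = f \<and> mul one f = f"
  define a :: 'a where "a = undefined"
  define f :: "'a series" where "f = (\<lambda>w. if w = [a] then 1 else 0)"
  have "eqn 0 (lderiv a (mul f one)) (SexpM \<alpha> \<beta> \<gamma> mul f one a)" by (rule D[OF Lvl_0])
  hence "lderiv a (mul f one) [] = SexpM \<alpha> \<beta> \<gamma> mul f one a []" by (simp add: eqn_0)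
  hence "mul f one [a] = \<alpha> * (f [] * one [])" using bg by (simp add: lderiv_def SexpM_apply mul_nil)
  hence "f [a] = \<alpha> * (f [] * one [])" using u by simp
  thus False by (simp add: f_def)
qed

end

theorem mainTheorem3:
  fixes P :: "pvar trm" and \<alpha> \<beta> \<gamma> :: rat
    and mul :: "('a::finite) series \<Rightarrow> 'a series \<Rightarrow> 'a series"
  assumes simple: "\<alpha> * \<gamma> = \<beta> * (\<beta> - 1)" "P \<approx> simple_rule \<alpha> \<beta> \<gamma>"
    and prod: "is_P_product P mul"
  shows "((\<exists>one. \<forall>f. mul f one = f \<and> mul one f = f) \<longleftrightarrow> (\<beta>, \<gamma>) \<noteq> (0, 0))
       \<and> ((\<beta>, \<gamma>) \<noteq> (0, 0) \<longrightarrow>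
           (\<exists>\<eta>. \<forall>one. (one [] = 1 \<and> (\<forall>a. lderiv a one = (\<lambda>w. \<eta> * one w)))
                  \<longrightarrow> (\<forall>f. mul f one = f \<and> mul one f = f)))"
proof -
  interpret pp P \<alpha> \<beta> \<gamma> mul using simple prod by unfold_locales
  define \<eta> where "\<eta> = (if \<gamma> = 0 then - \<alpha> else (1 - \<beta>) / \<gamma>)"
  have U: "\<forall>one. (one [] = 1 \<and> (\<forall>a. lderiv a one = (\<lambda>w. \<eta> * one w)))
                  \<longrightarrow> (\<forall>f. mul f one = f \<and> mul one f = f)" if bg: "(\<beta>, \<gamma>) \<noteq> (0, 0)"
  proof (intro allI impI)
    fix one f :: "'a series" assume h: "one [] = 1 \<and> (\<forall>a. lderiv a one = (\<lambda>w. \<eta> * one w))"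
    show "mul f one = f \<and> mul one f = f"
      by (rule unit[OF bg]) (use h in \<open>auto simp: \<eta>_def\<close>)
  qed
  have E: "\<exists>one. \<forall>f. mul f one = f \<and> mul one f = f" if bg: "(\<beta>, \<gamma>) \<noteq> (0, 0)"
  proof -
    define one :: "'a series" where "one = (\<lambda>w. \<eta> ^ length w)"
    have "one [] = 1 \<and> (\<forall>a. lderiv a one = (\<lambda>w. \<eta> * one w))"
      by (simp add: one_def lderiv_def)
    thus ?thesis using U[OF bg] by blast
  qed
  have N: "(\<exists>one. \<forall>f. mul f one = f \<and> mul one f = f) \<Longrightarrow> (\<beta>, \<gamma>) \<noteq> (0, 0)"
    using no_unit by auto
  show ?thesis using U E N by blast
qed

end
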